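(* Let $p$ be a prime and $\sigma$ a $p$-uniform morphism on $\mathcal A_m$. For every $n\in\mathbb{N}^*$, $$M_{\sigma^n}(T)=M_\sigma(T^{p^{n-1}})M_\sigma(T^{p^{n-2}})\cdots M_\sigma(T).$$
   Context: $\mathcal A_m=\{0,\dots,m-1\}$. For $W=w_0\cdots w_{r-1}\in\mathcal A_m^*$ and $j\in\mathcal A_m$, $\beta_{W,j}(T)=\sum_{i:\,w_i=j}T^{r-1-i}\in\mathbb{F}_p[T]$ (zero if $j$ does not occur). For a uniform morphism $\tau$ on $\mathcal A_m$, $M_\tau(T)=(\beta_{\tau(i),j}(T))_{0\le i,j\le m-1}$; $\sigma^n$ is again uniform (of length $p^n$). *)

theory Defs
  imports "Jordan_Normal_Form.Matrix" "HOL-Computational_Algebra.Polynomial"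
begin

text \<open>Letters of A_m are the naturals < m; words are lists. A morphism is a map
  sigma :: nat => nat list, extended to words by concatenation.\<close>

definition morph_ext :: "(nat \<Rightarrow> nat list) \<Rightarrow> nat list \<Rightarrow> nat list" where
  "morph_ext \<sigma> w = concat (map \<sigma> w)"

definition morph_pow :: "(nat \<Rightarrow> nat list) \<Rightarrow> nat \<Rightarrow> nat \<Rightarrow> nat list" where
  "morph_pow \<sigma> n i = (morph_ext \<sigma> ^^ n) [i]"

definition is_morphism :: "nat \<Rightarrow> (nat \<Rightarrow> nat list) \<Rightarrow> bool" where
  "is_morphism m \<sigma> \<longleftrightarrow> (\<forall>i<m. set (\<sigma> i) \<subseteq> {..<m})"

definition is_uniform_morphism :: "nat \<Rightarrow> nat \<Rightarrow> (nat \<Rightarrow> nat list) \<Rightarrow> bool" where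
  "is_uniform_morphism m L \<sigma> \<longleftrightarrow> is_morphism m \<sigma> \<and> (\<forall>i<m. length (\<sigma> i) = L)"

definition beta :: "nat list \<Rightarrow> nat \<Rightarrow> 'a::comm_semiring_1 poly" where
  "beta W j = (\<Sum>i<length W. if W ! i = j then monom 1 (length W - 1 - i) else 0)"

definition Mmat :: "nat \<Rightarrow> (nat \<Rightarrow> nat list) \<Rightarrow> 'a::comm_semiring_1 poly mat" where
  "Mmat m \<tau> = mat m m (\<lambda>(i, j). beta (\<tau> i) j)"

definition subst_pow :: "nat \<Rightarrow> 'a::comm_semiring_1 poly mat \<Rightarrow> 'a poly mat" where
  "subst_pow k M = map_mat (\<lambda>q. pcompose q (monom 1 k)) M"

end

theory Submission
  imports Defs
begin


lemma beta_Nil: "beta [] j = 0" by (simp add: beta_def)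

lemma beta_Cons: "beta (x # w) j = (if x = j then monom 1 (length w) else 0) + beta w j"
proof -
  have e: "(\<Sum>i<length w. if w ! i = j then monom 1 (Suc (length w) - 1 - Suc i) else 0)
    = (\<Sum>i<length w. if w ! i = j then monom 1 (length w - 1 - i) else (0::'a poly))"
    by (rule sum.cong) (auto simp: diff_diff_left)
  show ?thesis
  unfolding beta_def length_Cons sum.lessThan_Suc_shift nth_Cons_0 nth_Cons_Suc e by simp
qed

lemma beta_append: "beta (u @ v) j = beta u j * monom 1 (length v) + beta v j"
  by (induction u) (auto simp: beta_Nil beta_Cons mult_monom algebra_simps)

lemma pcompose_monom1: "pcompose (monom (1::'a::comm_ring_1) a) (monom 1 K) = monom 1 (a * K)"
  by (simp add: pcompose_altdef poly_monom map_poly_monom monom_power mult.commute)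

lemma ext_append: "morph_ext s (u @ v) = morph_ext s u @ morph_ext s v"
  by (simp add: morph_ext_def)

lemma extpow_append: "(morph_ext s ^^ n) (u @ v) = (morph_ext s ^^ n) u @ (morph_ext s ^^ n) v"
  by (induction n) (simp_all add: ext_append)

lemma extpow_Nil: "(morph_ext s ^^ n) [] = []"
  by (induction n) (simp_all add: morph_ext_def)

lemma extpow_concat: "(morph_ext s ^^ n) w = concat (map (morph_pow s n) w)"
proof (induction w)
  case Nil then show ?case by (simp add: extpow_Nil)
next
  case (Cons x w)
  have "(morph_ext s ^^ n) (x # w) = (morph_ext s ^^ n) ([x] @ w)" by simp
  also have "\<dots> = morph_pow s n x @ (morph_ext s ^^ n) w"
    by (simp only: extpow_append morph_pow_def)
  finally show ?case using Cons by simp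
qed

lemma morph_pow_Suc: "morph_pow s (Suc n) i = concat (map (morph_pow s n) (s i))"
proof -
  have "morph_pow s (Suc n) i = (morph_ext s ^^ n) (morph_ext s [i])"
    unfolding morph_pow_def funpow_Suc_right by simp
  also have "morph_ext s [i] = s i" by (simp add: morph_ext_def)
  finally show ?thesis by (simp add: extpow_concat)
qed

lemma morph_pow_0: "morph_pow s 0 i = [i]" by (simp add: morph_pow_def)

lemma morph_pow_props:
  assumes "is_uniform_morphism m p s" "i < m"
  shows "set (morph_pow s n i) \<subseteq> {..<m} \<and> length (morph_pow s n i) = p ^ n"
  using assms(2)
proof (induction n arbitrary: i)
  case 0 then show ?case by (simp add: morph_pow_0)
next
  case (Suc n)
  have si: "set (s i) \<subseteq> {..<m}" "length (s i) = p"
    using assms(1) Suc.prems unfolding is_uniform_morphism_def is_morphism_def by auto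
  have "map (length \<circ> morph_pow s n) (s i) = map (\<lambda>_. p ^ n) (s i)"
    using Suc.IH si(1) by (auto intro!: map_cong)
  then have "length (morph_pow s (Suc n) i) = p * p ^ n"
    by (simp only: morph_pow_Suc length_concat map_map sum_list_triv si(2)) simp
  moreover have "set (morph_pow s (Suc n) i) \<subseteq> {..<m}"
    using Suc.IH si(1) by (auto simp: morph_pow_Suc)
  ultimately show ?case by simp
qed

lemma beta_concat:
  assumes "\<forall>x\<in>set w. x < m \<and> length (f x) = K"
  shows "(beta (concat (map f w)) j :: 'a::comm_ring_1 poly)
       = (\<Sum>l<m. pcompose (beta w l) (monom 1 K) * beta (f l) j)"
  using assms
proof (induction w)
  case Nil then show ?case by (simp add: beta_Nil)
next
  case (Cons x w)
  have lc: "length (concat (map f w)) = K * length w"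
    using Cons.prems by (simp add: length_concat sum_list_triv cong: map_cong)
  have xm: "x < m" using Cons.prems by simp
  have A: "(beta (concat (map f (x # w))) j :: 'a poly) = beta (f x) j * monom 1 (K * length w) + beta (concat (map f w)) j"
    by (simp add: beta_append lc)
  have B: "(beta (concat (map f w)) j :: 'a poly) = (\<Sum>l<m. pcompose (beta w l) (monom 1 K) * beta (f l) j)"
    using Cons by simp
  have C: "(\<Sum>l<m. pcompose (beta (x # w) l) (monom 1 K) * beta (f l) j :: 'a poly)
     = (\<Sum>l<m. (if x = l then monom 1 (length w * K) else 0) * beta (f l) j)
       + (\<Sum>l<m. pcompose (beta w l) (monom 1 K) * beta (f l) j)"
    unfolding sum.distrib[symmetric]
    by (rule sum.cong) (auto simp: beta_Cons pcompose_add distrib_right pcompose_monom1)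
  have D: "(\<Sum>l<m. (if x = l then monom 1 (length w * K) else 0) * beta (f l) j :: 'a poly)
      = monom 1 (length w * K) * beta (f x) j"
  proof -
    have "(\<Sum>l<m. (if x = l then monom 1 (length w * K) else 0) * beta (f l) j)
        = (\<Sum>l<m. if x = l then monom 1 (length w * K) * beta (f l) j else (0::'a poly))"
      by (rule sum.cong) auto
    also have "\<dots> = monom 1 (length w * K) * beta (f x) j" using xm by (simp add: sum.delta)
    finally show ?thesis .
  qed
  show ?case using A B C D by (simp add: mult.commute)
qed



lemma main_gen:
  assumes "is_uniform_morphism m p \<sigma>"
  shows "(Mmat m (morph_pow \<sigma> n) :: 'f::comm_ring_1 poly mat)
       = foldr (\<lambda>k A. subst_pow (p ^ k) (Mmat m \<sigma>) * A) (rev [0..<n]) (1\<^sub>m m)"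
proof (induction n)
  case 0
  show ?case
    by (rule eq_matI) (auto simp: Mmat_def morph_pow_0 beta_Cons beta_Nil)
next
  case (Suc n)
  have "foldr (\<lambda>k A. subst_pow (p ^ k) (Mmat m \<sigma>) * A) (rev [0..<Suc n]) (1\<^sub>m m)
     = subst_pow (p ^ n) (Mmat m \<sigma>) * (Mmat m (morph_pow \<sigma> n) :: 'f poly mat)"
    using Suc.IH by simp
  also have "\<dots> = Mmat m (morph_pow \<sigma> (Suc n))"
  proof (rule eq_matI)
    fix i j assume ij: "i < dim_row (Mmat m (morph_pow \<sigma> (Suc n)) :: 'f poly mat)"
      "j < dim_col (Mmat m (morph_pow \<sigma> (Suc n)) :: 'f poly mat)"
    then have im: "i < m" and jm: "j < m" by (auto simp: Mmat_def)
    have si: "set (\<sigma> i) \<subseteq> {..<m}"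
      using assms im unfolding is_uniform_morphism_def is_morphism_def by auto
    have w: "\<forall>x\<in>set (\<sigma> i). x < m \<and> length (morph_pow \<sigma> n x) = p ^ n"
      using si morph_pow_props[OF assms] by auto
    have "(Mmat m (morph_pow \<sigma> (Suc n)) :: 'f poly mat) $$ (i, j)
       = (\<Sum>l<m. pcompose (beta (\<sigma> i) l) (monom 1 (p ^ n)) * beta (morph_pow \<sigma> n l) j)"
      using im jm by (simp add: Mmat_def morph_pow_Suc beta_concat[OF w])
    also have "\<dots> = (subst_pow (p ^ n) (Mmat m \<sigma>) * (Mmat m (morph_pow \<sigma> n) :: 'f poly mat)) $$ (i, j)"
      using im jm by (auto simp: Mmat_def subst_pow_def scalar_prod_def lessThan_atLeast0 intro!: sum.cong)
    finally show "(subst_pow (p ^ n) (Mmat m \<sigma>) * (Mmat m (morph_pow \<sigma> n) :: 'f poly mat)) $$ (i, j)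
       = (Mmat m (morph_pow \<sigma> (Suc n)) :: 'f poly mat) $$ (i, j)" by simp
  qed (auto simp: Mmat_def subst_pow_def)
  finally show ?case by simp
qed


theorem corollary4p12:
  fixes p m n :: nat and \<sigma> :: "nat \<Rightarrow> nat list"
  assumes "prime p"
    and "card (UNIV :: 'f set) = p"
    and "is_uniform_morphism m p \<sigma>"
    and "n \<ge> 1"
  shows "(Mmat m (morph_pow \<sigma> n) :: 'f::field poly mat)
       = foldr (\<lambda>k A. subst_pow (p ^ k) (Mmat m \<sigma>) * A) (rev [0..<n]) (1\<^sub>m m)"
  by (rule main_gen[OF assms(3)])

end
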